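(* Let $\mathfrak{L}$ be a left Leibniz algebra over a field $\mathbb{F}$, and let $M$ be a left $\mathfrak{L}$-module. Then: (a) $\mathrm{HL}^n(\mathfrak{L},M_s)=\widetilde{\mathrm{HL}}^n(\mathfrak{L},M)$ for every integer $n\ge 0$; (b) $\mathrm{HL}^0(\mathfrak{L},M_a)=M$, and $\mathrm{HL}^n(\mathfrak{L},M_a)\cong\widetilde{\mathrm{HL}}^{n-1}(\mathfrak{L},\mathrm{Hom}_{\mathbb{F}}(\mathfrak{L},M))=\mathrm{HL}^{n-1}(\mathfrak{L},\mathrm{Hom}_{\mathbb{F}}(\mathfrak{L},M)_s)$ for every integer $n\ge 1$, where $\mathrm{Hom}_{\mathbb{F}}(\mathfrak{L},M)$ is a left $\mathfrak{L}$-module via $(x\cdot f)(y):=x\cdot f(y)-f(xy)$.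
   Context: A left Leibniz algebra is a vector space with bilinear product satisfying $x(yz)=(xy)z+y(xz)$. A left $\mathfrak{L}$-module is a vector space $M$ with bilinear $x\cdot m$ such that $(xy)\cdot m=x\cdot(y\cdot m)-y\cdot(x\cdot m)$. A bimodule additionally has a right action with $(x\cdot m)\cdot y=x\cdot(m\cdot y)-m\cdot(xy)$ and $(m\cdot x)\cdot y=m\cdot(xy)-x\cdot(m\cdot y)$. For a left module $M$, $M_s$ is the bimodule with right action $m\cdot x:=-x\cdot m$ and $M_a$ the bimodule with right action $m\cdot x:=0$. $\mathrm{HL}^n(\mathfrak{L},M)$ is the cohomology of $\mathrm{CL}^n(\mathfrak{L},M)=\mathrm{Hom}_{\mathbb{F}}(\mathfrak{L}^{\otimes n},M)$ with $(\mathrm{d}^nf)(x_1,\dots,x_{n+1})=\sum_{i=1}^n(-1)^{i+1}x_i\cdot f(\dots,\hat{x}_i,\dots)+(-1)^{n+1}f(x_1,\dots,x_n)\cdot x_{n+1}+\sum_{i<j}(-1)^if(x_1,\dots,\hat{x}_i,\dots,x_ix_j,\dots,x_{n+1})$ ($x_ix_j$ in the $j$-th position). For a left module $M$, $\widetilde{\mathrm{HL}}^n(\mathfrak{L},M)$ is the cohomology of $\mathrm{CL}^n(\mathfrak{L},M)$ with $(\widetilde{\mathrm{d}}^nf)(x_1,\dots,x_{n+1})=\sum_{i=1}^{n+1}(-1)^{i+1}x_i\cdot f(x_1,\dots,\hat{x}_i,\dots,x_{n+1})+\sum_{i<j}(-1)^if(x_1,\dots,\hat{x}_i,\dots,x_ix_j,\dots,x_{n+1})$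 ($x_ix_j$ in the $j$-th position). *)

theory Defs
  imports Main "HOL.Vector_Spaces" "HOL-Library.Function_Algebras"
begin

definition left_leibniz_algebra ::
  "('k::field \<Rightarrow> 'l::ab_group_add \<Rightarrow> 'l) \<Rightarrow> ('l \<Rightarrow> 'l \<Rightarrow> 'l) \<Rightarrow> bool" where
  "left_leibniz_algebra sl mult \<longleftrightarrow>
     vector_space sl \<and>
     (\<forall>x. Vector_Spaces.linear sl sl (mult x)) \<and>
     (\<forall>y. Vector_Spaces.linear sl sl (\<lambda>x. mult x y)) \<and>
     (\<forall>x y z. mult x (mult y z) = mult (mult x y) z + mult y (mult x z))"

definition left_module ::
  "('k::field \<Rightarrow> 'l::ab_group_add \<Rightarrow> 'l) \<Rightarrow> ('l \<Rightarrow> 'l \<Rightarrow> 'l) \<Rightarrow>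
   ('k \<Rightarrow> 'v::ab_group_add \<Rightarrow> 'v) \<Rightarrow> 'v set \<Rightarrow> ('l \<Rightarrow> 'v \<Rightarrow> 'v) \<Rightarrow> bool" where
  "left_module sl mult sc V act \<longleftrightarrow>
     vector_space sc \<and>
     0 \<in> V \<and> (\<forall>m\<in>V. \<forall>n\<in>V. m + n \<in> V) \<and> (\<forall>c. \<forall>m\<in>V. sc c m \<in> V) \<and>
     (\<forall>x. \<forall>m\<in>V. act x m \<in> V) \<and>
     (\<forall>x y. \<forall>m\<in>V. act (x + y) m = act x m + act y m) \<and>
     (\<forall>c x. \<forall>m\<in>V. act (sl c x) m = sc c (act x m)) \<and>
     (\<forall>x. \<forall>m\<in>V. \<forall>n\<in>V. act x (m + n) = act x m + act x n) \<and>
     (\<forall>c x. \<forall>m\<in>V. act x (sc c m) = sc c (act x m)) \<and>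
     (\<forall>x y. \<forall>m\<in>V. act (mult x y) m = act x (act y m) - act y (act x m))"

definition ract_s :: "('l \<Rightarrow> 'v \<Rightarrow> 'v::ab_group_add) \<Rightarrow> 'v \<Rightarrow> 'l \<Rightarrow> 'v" where
  "ract_s act m x = - act x m"

definition ract_a :: "('l \<Rightarrow> 'v \<Rightarrow> 'v::ab_group_add) \<Rightarrow> 'v \<Rightarrow> 'l \<Rightarrow> 'v" where
  "ract_a act m x = 0"

definition hom_space ::
  "('k::field \<Rightarrow> 'l::ab_group_add \<Rightarrow> 'l) \<Rightarrow> ('k \<Rightarrow> 'm::ab_group_add \<Rightarrow> 'm) \<Rightarrow> ('l \<Rightarrow> 'm) set" where
  "hom_space sl sm = {h. Vector_Spaces.linear sl sm h}"

definition hom_scale :: "('k \<Rightarrow> 'm \<Rightarrow> 'm) \<Rightarrow> 'k \<Rightarrow> ('l \<Rightarrow> 'm) \<Rightarrow> ('l \<Rightarrow> 'm)" where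
  "hom_scale sm c h = (\<lambda>y. sm c (h y))"

definition hom_act ::
  "('l \<Rightarrow> 'l \<Rightarrow> 'l) \<Rightarrow> ('l \<Rightarrow> 'm \<Rightarrow> 'm) \<Rightarrow> 'l \<Rightarrow> ('l \<Rightarrow> 'm::ab_group_add) \<Rightarrow> ('l \<Rightarrow> 'm)" where
  "hom_act mult act x h = (\<lambda>y. act x (h y) - h (mult x y))"

text \<open>CL^n(L,V) = Hom_F(L^{\<otimes>n}, V), represented as n-multilinear maps on lists of length n
  (extended by 0 on lists of other lengths).\<close>
definition cochain ::
  "('k::field \<Rightarrow> 'l::ab_group_add \<Rightarrow> 'l) \<Rightarrow> ('k \<Rightarrow> 'v::ab_group_add \<Rightarrow> 'v) \<Rightarrow> 'v set \<Rightarrow> nat \<Rightarrow>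
   ('l list \<Rightarrow> 'v) \<Rightarrow> bool" where
  "cochain sl sc V n f \<longleftrightarrow>
     (\<forall>xs. length xs = n \<longrightarrow> f xs \<in> V) \<and>
     (\<forall>xs. length xs \<noteq> n \<longrightarrow> f xs = 0) \<and>
     (\<forall>xs i a b. length xs = n \<and> i < n \<longrightarrow> f (xs[i := a + b]) = f (xs[i := a]) + f (xs[i := b])) \<and>
     (\<forall>xs i c a. length xs = n \<and> i < n \<longrightarrow> f (xs[i := sl c a]) = sc c (f (xs[i := a])))"

definition cochains ::
  "('k::field \<Rightarrow> 'l::ab_group_add \<Rightarrow> 'l) \<Rightarrow> ('k \<Rightarrow> 'v::ab_group_add \<Rightarrow> 'v) \<Rightarrow> 'v set \<Rightarrow> nat \<Rightarrow>
   ('l list \<Rightarrow> 'v) set" where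
  "cochains sl sc V n = {f. cochain sl sc V n f}"

definition cscale :: "('k \<Rightarrow> 'v \<Rightarrow> 'v) \<Rightarrow> 'k \<Rightarrow> ('l list \<Rightarrow> 'v) \<Rightarrow> ('l list \<Rightarrow> 'v)" where
  "cscale sc c f = (\<lambda>xs. sc c (f xs))"

definition sgnv :: "nat \<Rightarrow> 'v::ab_group_add \<Rightarrow> 'v" where
  "sgnv k v = (if even k then v else - v)"

definition del :: "nat \<Rightarrow> 'a list \<Rightarrow> 'a list" where
  "del i xs = take i xs @ drop (Suc i) xs"

text \<open>The Leibniz coboundary d^n for a bimodule (left action lact, right action ract).
  Indices are 0-based: entry i of the list is x_{i+1}.\<close>
definition dL ::
  "('l \<Rightarrow> 'l \<Rightarrow> 'l) \<Rightarrow> ('l \<Rightarrow> 'v \<Rightarrow> 'v) \<Rightarrow> ('v \<Rightarrow> 'l \<Rightarrow> 'v) \<Rightarrow> nat \<Rightarrow>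
   ('l list \<Rightarrow> 'v::ab_group_add) \<Rightarrow> ('l list \<Rightarrow> 'v)" where
  "dL mult lact ract n f xs =
     (if length xs = Suc n then
        (\<Sum>i<n. sgnv i (lact (xs ! i) (f (del i xs))))
        + sgnv (Suc n) (ract (f (take n xs)) (xs ! n))
        + (\<Sum>j<Suc n. \<Sum>i<j. sgnv (Suc i) (f (del i (xs[j := mult (xs ! i) (xs ! j)]))))
      else 0)"

definition dLt ::
  "('l \<Rightarrow> 'l \<Rightarrow> 'l) \<Rightarrow> ('l \<Rightarrow> 'v \<Rightarrow> 'v) \<Rightarrow> nat \<Rightarrow>
   ('l list \<Rightarrow> 'v::ab_group_add) \<Rightarrow> ('l list \<Rightarrow> 'v)" where
  "dLt mult lact n f xs =
     (if length xs = Suc n then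
        (\<Sum>i<Suc n. sgnv i (lact (xs ! i) (f (del i xs))))
        + (\<Sum>j<Suc n. \<Sum>i<j. sgnv (Suc i) (f (del i (xs[j := mult (xs ! i) (xs ! j)]))))
      else 0)"

definition cocycles where
  "cocycles sl sc V D n = {f \<in> cochains sl sc V n. D n f = 0}"

definition coboundaries where
  "coboundaries sl sc V D n =
     (if n = 0 then {0} else D (n - 1) ` cochains sl sc V (n - 1))"

definition coset :: "'a::ab_group_add set \<Rightarrow> 'a \<Rightarrow> 'a set" where
  "coset B z = (\<lambda>b. z + b) ` B"

definition quot :: "'a::ab_group_add set \<Rightarrow> 'a set \<Rightarrow> 'a set set" where
  "quot Z B = coset B ` Z"

definition HL where
  "HL sl mult sc V lact ract n =
     quot (cocycles sl sc V (dL mult lact ract) n) (coboundaries sl sc V (dL mult lact ract) n)"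

definition HLt where
  "HLt sl mult sc V lact n =
     quot (cocycles sl sc V (dLt mult lact) n) (coboundaries sl sc V (dLt mult lact) n)"

text \<open>Linear isomorphism of quotient spaces Z1/B1 \<cong> Z2/B2 (scalar multiplications sc1, sc2):
  a bijection between the sets of cosets that is compatible with addition and scalar
  multiplication of cosets (computed on representatives).\<close>
definition quot_iso ::
  "('k \<Rightarrow> 'a::ab_group_add \<Rightarrow> 'a) \<Rightarrow> 'a set \<Rightarrow> 'a set \<Rightarrow>
   ('k \<Rightarrow> 'b::ab_group_add \<Rightarrow> 'b) \<Rightarrow> 'b set \<Rightarrow> 'b set \<Rightarrow> bool" where
  "quot_iso sc1 Z1 B1 sc2 Z2 B2 \<longleftrightarrow>
     (\<exists>\<Phi>. bij_betw \<Phi> (quot Z1 B1) (quot Z2 B2) \<and>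
        (\<forall>z\<in>Z1. \<forall>w\<in>Z1. \<forall>z'\<in>Z2. \<forall>w'\<in>Z2.
           \<Phi> (coset B1 z) = coset B2 z' \<longrightarrow> \<Phi> (coset B1 w) = coset B2 w' \<longrightarrow>
           \<Phi> (coset B1 (z + w)) = coset B2 (z' + w')) \<and>
        (\<forall>c. \<forall>z\<in>Z1. \<forall>z'\<in>Z2.
           \<Phi> (coset B1 z) = coset B2 z' \<longrightarrow> \<Phi> (coset B1 (sc1 c z)) = coset B2 (sc2 c z')))"

definition HL_iso_HLt where
  "HL_iso_HLt sl mult sc V lact ract n sc' V' lact' m \<longleftrightarrow>
     quot_iso (cscale sc)
       (cocycles sl sc V (dL mult lact ract) n) (coboundaries sl sc V (dL mult lact ract) n)
       (cscale sc')
       (cocycles sl sc' V' (dLt mult lact') m) (coboundaries sl sc' V' (dLt mult lact') m)"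

definition HL_iso_space where
  "HL_iso_space sl mult sc V lact ract n sc' V' \<longleftrightarrow>
     quot_iso (cscale sc)
       (cocycles sl sc V (dL mult lact ract) n) (coboundaries sl sc V (dL mult lact ract) n)
       sc' V' {0}"

end

theory Submission
  imports Defs
begin

lemma coset_eq_iff:
  assumes "0 \<in> B" "\<And>a b. a \<in> B \<Longrightarrow> b \<in> B \<Longrightarrow> a - b \<in> B"
  shows "coset B z = coset B w \<longleftrightarrow> z - w \<in> B"
proof
  assume "coset B z = coset B w"
  moreover have "z \<in> coset B z" unfolding coset_def using assms(1) by (metis add_0_right image_eqI)
  ultimately obtain b where "b \<in> B" "z = w + b" unfolding coset_def by auto
  then show "z - w \<in> B" by simp
next
  assume d: "z - w \<in> B"
  have nb: "0 - b \<in> B" if "b \<in> B" for b using assms that by blast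
  have pb: "a + b \<in> B" if "a \<in> B" "b \<in> B" for a b
    using assms(2)[OF that(1) nb[OF that(2)]] by simp
  show "coset B z = coset B w"
    unfolding coset_def
  proof (intro equalityI subsetI)
    fix x assume "x \<in> (\<lambda>b. z + b) ` B"
    then obtain b where b: "b \<in> B" "x = z + b" by auto
    have "x = w + ((z - w) + b)" using b by simp
    then show "x \<in> (\<lambda>b. w + b) ` B" using pb[OF d b(1)] by blast
  next
    fix x assume "x \<in> (\<lambda>b. w + b) ` B"
    then obtain b where b: "b \<in> B" "x = w + b" by auto
    have "x = z + (b - (z - w))" using b by simp
    then show "x \<in> (\<lambda>b. z + b) ` B" using assms(2)[OF b(1) d] by blast
  qed
qed

lemma image_coset:
  assumes "\<And>a b. \<phi> (a + b) = \<phi> a + \<phi> b" "\<phi> ` B1 = B2"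
  shows "\<phi> ` coset B1 z = coset B2 (\<phi> z)"
  unfolding coset_def image_image assms(1) using assms(2) by (metis image_image)

lemma quot_iso_transfer:
  assumes inj: "inj_on \<phi> SS"
    and ZS: "\<And>z b. z \<in> ZA \<Longrightarrow> b \<in> BA \<Longrightarrow> z + b \<in> SS"
    and Zimg: "\<phi> ` ZA = ZB" and Bimg: "\<phi> ` BA = BB"
    and add: "\<And>a b. \<phi> (a + b) = \<phi> a + \<phi> b"
    and B0: "0 \<in> BA" and Bdiff: "\<And>a b. a \<in> BA \<Longrightarrow> b \<in> BA \<Longrightarrow> a - b \<in> BA"
    and sdiff: "\<And>c a b. scA c a - scA c b = scA c (a - b)"
    and Bsc: "\<And>c a. a \<in> BA \<Longrightarrow> scA c a \<in> BA"
    and phisc: "\<And>c a. \<phi> (scA c a) = scB c (\<phi> a)"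
  shows "quot_iso scA ZA BA scB ZB BB"
proof -
  have img: "\<phi> ` coset BA z = coset BB (\<phi> z)" for z by (rule image_coset[OF add Bimg])
  have sub: "coset BA z \<subseteq> SS" if "z \<in> ZA" for z using ZS[OF that] unfolding coset_def by auto
  have injc: "coset BA z = coset BA w" if "z \<in> ZA" "w \<in> ZA" "\<phi> ` coset BA z = \<phi> ` coset BA w" for z w
    using inj_on_image_eq_iff[OF inj sub[OF that(1)] sub[OF that(2)]] that(3) by blast
  have pull: "\<exists>z''\<in>ZA. z' = \<phi> z'' \<and> z - z'' \<in> BA"
    if h: "z \<in> ZA" "z' \<in> ZB" "\<phi> ` coset BA z = coset BB z'" for z z'
  proof -
    obtain z'' where z'': "z'' \<in> ZA" "z' = \<phi> z''" using h(2) Zimg by blast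
    have "coset BA z = coset BA z''" using injc[OF h(1) z''(1)] h(3) img z''(2) by simp
    then have "z - z'' \<in> BA" using coset_eq_iff[of BA, OF B0 Bdiff] by blast
    then show ?thesis using z'' by blast
  qed
  have pb: "a + b \<in> BA" if "a \<in> BA" "b \<in> BA" for a b
    using Bdiff[OF that(1) Bdiff[OF B0 that(2)]] by simp
  show ?thesis
    unfolding quot_iso_def
  proof (intro exI[of _ "\<lambda>C. \<phi> ` C"] conjI ballI allI impI)
    show "bij_betw ((`) \<phi>) (quot ZA BA) (quot ZB BB)"
      unfolding bij_betw_def
    proof
      show "inj_on ((`) \<phi>) (quot ZA BA)" unfolding quot_def inj_on_def using injc by blast
      have "(`) \<phi> ` quot ZA BA = (\<lambda>z. coset BB (\<phi> z)) ` ZA" unfolding quot_def image_image img ..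
      also have "\<dots> = quot ZB BB" unfolding quot_def Zimg[symmetric] image_image ..
      finally show "(`) \<phi> ` quot ZA BA = quot ZB BB" .
    qed
  next
    fix z w z' w'
    assume z: "z \<in> ZA" and w: "w \<in> ZA" and z': "z' \<in> ZB" and w': "w' \<in> ZB"
      and hz: "\<phi> ` coset BA z = coset BB z'" and hw: "\<phi> ` coset BA w = coset BB w'"
    obtain z'' where z'': "z'' \<in> ZA" "z' = \<phi> z''" "z - z'' \<in> BA" using pull[OF z z' hz] by blast
    obtain w'' where w'': "w'' \<in> ZA" "w' = \<phi> w''" "w - w'' \<in> BA" using pull[OF w w' hw] by blast
    have e: "(z + w) - (z'' + w'') = (z - z'') + (w - w'')" by simp
    have "(z + w) - (z'' + w'') \<in> BA" by (subst e) (rule pb[OF z''(3) w''(3)])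
    then have "coset BA (z + w) = coset BA (z'' + w'')" using coset_eq_iff[of BA, OF B0 Bdiff] by blast
    then show "\<phi> ` coset BA (z + w) = coset BB (z' + w')" using img z''(2) w''(2) add by simp
  next
    fix c z z'
    assume z: "z \<in> ZA" and z': "z' \<in> ZB" and hz: "\<phi> ` coset BA z = coset BB z'"
    obtain z'' where z'': "z'' \<in> ZA" "z' = \<phi> z''" "z - z'' \<in> BA" using pull[OF z z' hz] by blast
    have "scA c z - scA c z'' \<in> BA" using sdiff Bsc[OF z''(3)] by simp
    then have "coset BA (scA c z) = coset BA (scA c z'')" using coset_eq_iff[of BA, OF B0 Bdiff] by blast
    then show "\<phi> ` coset BA (scA c z) = coset BB (scB c z')" using img z''(2) phisc by simp
  qed
qed


lemma sgnv_add: "sgnv k (a + b) = sgnv k a + sgnv k (b::'v::ab_group_add)"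
  by (simp add: sgnv_def)
lemma sgnv_diff: "sgnv k (a - b) = sgnv k a - sgnv k (b::'v::ab_group_add)"
  by (simp add: sgnv_def)
lemma sgnv_zero[simp]: "sgnv k (0::'v::ab_group_add) = 0"
  by (simp add: sgnv_def)
lemma sgnv_Suc: "sgnv (Suc k) (v::'v::ab_group_add) = - sgnv k v"
  by (simp add: sgnv_def)
lemma sgnv_apply: "sgnv k h y = sgnv k (h y)"
  by (simp add: sgnv_def)
lemma sum_fun_apply: "(\<Sum>i\<in>A. f i) y = (\<Sum>i\<in>A. f i y)"
  by (induct A rule: infinite_finite_induct) auto

lemma del_append: "i < length xs \<Longrightarrow> del i (xs @ [y]) = del i xs @ [y]"
  by (simp add: del_def)
lemma length_del: "i < length xs \<Longrightarrow> length (del i xs) = length xs - 1"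
  by (simp add: del_def)

lemma dL_s: "dL mult lact (ract_s lact) = dLt mult lact"
proof (intro ext)
  fix n f xs
  show "dL mult lact (ract_s lact) n f xs = dLt mult lact n f xs"
  proof (cases "length xs = Suc n")
    case True
    have "del n xs = take n xs" using True by (simp add: del_def)
    then show ?thesis using True
      by (simp add: dL_def dLt_def ract_s_def sgnv_Suc sgnv_def)
  next
    case False then show ?thesis by (simp add: dL_def dLt_def)
  qed
qed


definition phi :: "nat \<Rightarrow> ('l list \<Rightarrow> 'm::ab_group_add) \<Rightarrow> ('l list \<Rightarrow> ('l \<Rightarrow> 'm))" where
  "phi k f = (\<lambda>xs. if length xs = k then (\<lambda>y. f (xs @ [y])) else 0)"

definition psi :: "nat \<Rightarrow> ('l list \<Rightarrow> ('l \<Rightarrow> 'm::ab_group_add)) \<Rightarrow> ('l list \<Rightarrow> 'm)" where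
  "psi k g = (\<lambda>xs. if length xs = Suc k then g (butlast xs) (last xs) else 0)"

lemma chain:
  "phi (Suc k) (dL mult act (ract_a act) (Suc k) h) = dLt mult (hom_act mult act) k (phi k h)"
proof (intro ext)
  fix xs y
  show "phi (Suc k) (dL mult act (ract_a act) (Suc k) h) xs y = dLt mult (hom_act mult act) k (phi k h) xs y"
  proof (cases "length xs = Suc k")
    case False
    then show ?thesis by (simp add: phi_def dLt_def)
  next
    case len: True
    define ys where "ys = xs @ [y]"
    define a where "a i = sgnv i (act (xs ! i) (h (del i xs @ [y])))" for i
    define b where "b i = sgnv i (h (del i xs @ [mult (xs ! i) y]))" for i
    define c where "c j i = sgnv (Suc i) (h (del i (xs[j := mult (xs ! i) (xs ! j)]) @ [y]))" for j i
    have lys: "length ys = Suc (Suc k)" using len by (simp add: ys_def)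
    have L: "phi (Suc k) (dL mult act (ract_a act) (Suc k) h) xs y =
       (\<Sum>i<Suc k. sgnv i (act (ys ! i) (h (del i ys))))
       + (\<Sum>j<Suc (Suc k). \<Sum>i<j. sgnv (Suc i) (h (del i (ys[j := mult (ys ! i) (ys ! j)]))))"
      using len lys by (simp add: phi_def dL_def ract_a_def ys_def)
    have P1: "(\<Sum>i<Suc k. sgnv i (act (ys ! i) (h (del i ys)))) = (\<Sum>i<Suc k. a i)"
      by (rule sum.cong) (use len in \<open>auto simp: a_def ys_def nth_append del_append\<close>)
    have P3a: "(\<Sum>i<Suc k. sgnv (Suc i) (h (del i (ys[Suc k := mult (ys ! i) (ys ! Suc k)])))) = - (\<Sum>i<Suc k. b i)"
      unfolding sum_negf[symmetric]
    proof (rule sum.cong)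
      fix i assume "i \<in> {..<Suc k}"
      then have i: "i < length xs" using len by simp
      have "ys[Suc k := mult (ys ! i) (ys ! Suc k)] = xs @ [mult (xs ! i) y]"
        using i len by (simp add: ys_def nth_append list_update_append)
      then show "sgnv (Suc i) (h (del i (ys[Suc k := mult (ys ! i) (ys ! Suc k)]))) = - b i"
        using i by (simp add: b_def del_append sgnv_Suc)
    qed simp
    have P3b: "(\<Sum>j<Suc k. \<Sum>i<j. sgnv (Suc i) (h (del i (ys[j := mult (ys ! i) (ys ! j)]))))
        = (\<Sum>j<Suc k. \<Sum>i<j. c j i)"
    proof (intro sum.cong refl)
      fix j i assume j: "j \<in> {..<Suc k}" and i: "i \<in> {..<j}"
      then have jl: "j < length xs" "i < length xs" using len by auto
      have "ys[j := mult (ys ! i) (ys ! j)] = xs[j := mult (xs ! i) (xs ! j)] @ [y]"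
        using jl by (simp add: ys_def nth_append list_update_append)
      then show "sgnv (Suc i) (h (del i (ys[j := mult (ys ! i) (ys ! j)]))) = c j i"
        using jl by (simp add: c_def del_append)
    qed
    have R: "dLt mult (hom_act mult act) k (phi k h) xs y =
        (\<Sum>i<Suc k. a i - b i) + (\<Sum>j<Suc k. \<Sum>i<j. c j i)"
    proof -
      have "dLt mult (hom_act mult act) k (phi k h) xs y =
        (\<Sum>i<Suc k. sgnv i (hom_act mult act (xs ! i) (phi k h (del i xs)) y))
        + (\<Sum>j<Suc k. \<Sum>i<j. sgnv (Suc i) (phi k h (del i (xs[j := mult (xs ! i) (xs ! j)])) y))"
        using len by (simp add: dLt_def sum_fun_apply sgnv_apply)
      also have "(\<Sum>i<Suc k. sgnv i (hom_act mult act (xs ! i) (phi k h (del i xs)) y)) = (\<Sum>i<Suc k. a i - b i)"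
        by (rule sum.cong) (use len in \<open>auto simp: a_def b_def phi_def hom_act_def length_del sgnv_diff\<close>)
      also have "(\<Sum>j<Suc k. \<Sum>i<j. sgnv (Suc i) (phi k h (del i (xs[j := mult (xs ! i) (xs ! j)])) y))
          = (\<Sum>j<Suc k. \<Sum>i<j. c j i)"
        by (intro sum.cong refl) (use len in \<open>auto simp: c_def phi_def length_del\<close>)
      finally show ?thesis .
    qed
    show ?thesis unfolding L R P1 sum.lessThan_Suc[of _ "Suc k"] P3a P3b
      by (simp add: sum_subtractf)
  qed
qed


lemma phi_cochain:
  fixes f :: "'l::ab_group_add list \<Rightarrow> 'm::ab_group_add" and sl :: "'k::field \<Rightarrow> 'l::ab_group_add \<Rightarrow> 'l"
  assumes vl: "vector_space sl" and vm: "vector_space sm"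
    and f: "cochain sl sm UNIV (Suc k) f"
  shows "cochain sl (hom_scale sm) (hom_space sl sm) k (phi k f)"
proof -
  have fadd: "\<And>xs i a b. length xs = Suc k \<Longrightarrow> i < Suc k \<Longrightarrow> f (xs[i := a + b]) = f (xs[i := a]) + f (xs[i := b])"
    and fsc: "\<And>xs i c a. length xs = Suc k \<Longrightarrow> i < Suc k \<Longrightarrow> f (xs[i := sl c a]) = sm c (f (xs[i := a]))"
    using f unfolding cochain_def by blast+
  have lin: "(\<lambda>y. f (xs @ [y])) \<in> hom_space sl sm" if "length xs = k" for xs
  proof -
    have e: "(xs @ [0])[k := a] = xs @ [a]" for a using that by (simp add: list_update_append)
    show ?thesis unfolding hom_space_def linear_iff
      using vl vm fadd[of "xs @ [0]" k] fsc[of "xs @ [0]" k] that e by simp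
  qed
  have e2: "xs[i := a] @ [y] = (xs @ [y])[i := a]" if "i < length xs" for xs i a y
    using that by (simp add: list_update_append)
  show ?thesis unfolding cochain_def
  proof (intro conjI allI impI)
    fix xs :: "'l list" assume "length xs = k" then show "phi k f xs \<in> hom_space sl sm"
      using lin by (simp add: phi_def)
  next
    fix xs :: "'l list" assume "length xs \<noteq> k" then show "phi k f xs = 0" by (simp add: phi_def)
  next
    fix xs :: "'l list" and i a b assume h: "length xs = k \<and> i < k"
    show "phi k f (xs[i := a + b]) = phi k f (xs[i := a]) + phi k f (xs[i := b])"
      using h by (auto simp: phi_def e2 intro!: ext fadd)
  next
    fix xs :: "'l list" and i c a assume h: "length xs = k \<and> i < k"
    show "phi k f (xs[i := sl c a]) = hom_scale sm c (phi k f (xs[i := a]))"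
      using h by (auto simp: phi_def hom_scale_def e2 intro!: ext fsc)
  qed
qed

lemma psi_cochain:
  fixes g :: "'l::ab_group_add list \<Rightarrow> 'l \<Rightarrow> 'm::ab_group_add" and sl :: "'k::field \<Rightarrow> 'l::ab_group_add \<Rightarrow> 'l"
  assumes vl: "vector_space sl" and vm: "vector_space sm"
    and g: "cochain sl (hom_scale sm) (hom_space sl sm) k g"
  shows "cochain sl sm UNIV (Suc k) (psi k g)"
proof -
  have glin: "\<And>xs. length xs = k \<Longrightarrow> Vector_Spaces.linear sl sm (g xs)"
    and gadd: "\<And>xs i a b. length xs = k \<Longrightarrow> i < k \<Longrightarrow> g (xs[i := a + b]) = g (xs[i := a]) + g (xs[i := b])"
    and gsc: "\<And>xs i c a. length xs = k \<Longrightarrow> i < k \<Longrightarrow> g (xs[i := sl c a]) = hom_scale sm c (g (xs[i := a]))"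
    using g unfolding cochain_def hom_space_def by blast+
  have split: "\<exists>zs w. xs = zs @ [w] \<and> length zs = k" if "length xs = Suc k" for xs
    using that by (metis append_butlast_last_id length_butlast diff_Suc_1 list.size(3) nat.distinct(1))
  show ?thesis unfolding cochain_def
  proof (intro conjI allI impI)
    fix xs :: "'l list" assume "length xs \<noteq> Suc k" then show "psi k g xs = 0" by (simp add: psi_def)
  next
    fix xs :: "'l list" and i a b assume h: "length xs = Suc k \<and> i < Suc k"
    obtain zs w where zw: "xs = zs @ [w]" "length zs = k" using split h by blast
    show "psi k g (xs[i := a + b]) = psi k g (xs[i := a]) + psi k g (xs[i := b])"
    proof (cases "i = k")
      case True
      then show ?thesis using zw glin[OF zw(2)] unfolding linear_iff
        by (simp add: psi_def list_update_append)
    next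
      case False
      then have "i < k" using h by simp
      then show ?thesis using zw gadd[OF zw(2), of i a b]
        by (simp add: psi_def list_update_append)
    qed
  next
    fix xs :: "'l list" and i c a assume h: "length xs = Suc k \<and> i < Suc k"
    obtain zs w where zw: "xs = zs @ [w]" "length zs = k" using split h by blast
    show "psi k g (xs[i := sl c a]) = sm c (psi k g (xs[i := a]))"
    proof (cases "i = k")
      case True
      then show ?thesis using zw glin[OF zw(2)] unfolding linear_iff
        by (simp add: psi_def list_update_append)
    next
      case False
      then have "i < k" using h by simp
      then show ?thesis using zw gsc[OF zw(2), of i c a]
        by (simp add: psi_def list_update_append hom_scale_def)
    qed
  qed simp
qed

lemma phi_psi:
  assumes g: "cochain sl (hom_scale sm) (hom_space sl sm) k g"
  shows "phi k (psi k g) = g"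
proof (intro ext)
  fix xs y
  show "phi k (psi k g) xs y = g xs y"
    using g unfolding cochain_def by (auto simp: phi_def psi_def)
qed

lemma phi_inj: "inj_on (phi k) {f. \<forall>xs. length xs \<noteq> Suc k \<longrightarrow> f xs = 0}"
proof (rule inj_onI)
  fix f g assume f: "f \<in> {f. \<forall>xs. length xs \<noteq> Suc k \<longrightarrow> f xs = 0}"
    and g: "g \<in> {f. \<forall>xs. length xs \<noteq> Suc k \<longrightarrow> f xs = 0}" and e: "phi k f = phi k g"
  show "f = g"
  proof (rule ext)
    fix xs
    show "f xs = g xs"
    proof (cases "length xs = Suc k")
      case True
      then obtain zs w where zw: "xs = zs @ [w]" "length zs = k"
        by (metis append_butlast_last_id length_butlast diff_Suc_1 list.size(3) nat.distinct(1))
      have "phi k f zs w = phi k g zs w" using e by simp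
      then show ?thesis using zw by (simp add: phi_def)
    next
      case False then show ?thesis using f g by simp
    qed
  qed
qed

lemma phi_add: "phi k (a + b) = phi k a + phi k b"
  by (auto simp: phi_def intro!: ext)

lemma phi_zero: "phi k 0 = 0"
  by (auto simp: phi_def intro!: ext)

lemma phi_scale:
  assumes "module sm"
  shows "phi k (cscale sm c a) = cscale (hom_scale sm) c (phi k a)"
proof -
  interpret m: module sm by fact
  show ?thesis by (auto simp: phi_def cscale_def hom_scale_def intro!: ext)
qed


lemma cochain_zero: "module sm \<Longrightarrow> cochain sl sm UNIV n 0"
  by (simp add: cochain_def module.scale_zero_right)

lemma cochain_diff:
  assumes "module sm" "cochain sl sm UNIV n f" "cochain sl sm UNIV n g"
  shows "cochain sl sm UNIV n (f - g)"
proof -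
  interpret m: module sm by fact
  show ?thesis using assms(2,3) unfolding cochain_def
    by (simp add: m.scale_right_diff_distrib)
qed

lemma cochain_scale:
  assumes "module sm" "cochain sl sm UNIV n f"
  shows "cochain sl sm UNIV n (cscale sm c f)"
proof -
  interpret m: module sm by fact
  show ?thesis using assms(2) unfolding cochain_def cscale_def
    by (simp add: m.scale_right_distrib mult.commute)
qed

lemma dL_diff:
  assumes actadd: "\<And>x m n. act x (m + n) = act x m + act x (n::'m::ab_group_add)"
  shows "dL mult act (ract_a act) n (f - g) = dL mult act (ract_a act) n f - dL mult act (ract_a act) n g"
proof -
  have ad: "act x (m - n) = act x m - act x n" for x m n
    using actadd[of x "m - n" n] by (simp add: eq_diff_eq)
  show ?thesis
    by (auto simp: dL_def ract_a_def ad sgnv_diff sum_subtractf intro!: ext)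
qed

lemma dL_scale:
  assumes "module sm" and actsc: "\<And>x c m. act x (sm c m) = sm c (act x m)"
  shows "dL mult act (ract_a act) n (cscale sm c f) = cscale sm c (dL mult act (ract_a act) n f)"
proof -
  interpret m: module sm by fact
  have sg: "sgnv k (sm c v) = sm c (sgnv k v)" for k v by (simp add: sgnv_def)
  show ?thesis
    by (auto simp: dL_def ract_a_def cscale_def actsc sg m.scale_sum_right m.scale_right_distrib intro!: ext)
qed

lemma dL0: "dL mult act (ract_a act) 0 f = 0"
  by (auto simp: dL_def ract_a_def intro!: ext)


lemma iso_main:
  fixes sl :: "'k::field \<Rightarrow> 'l::ab_group_add \<Rightarrow> 'l"
    and mult :: "'l \<Rightarrow> 'l \<Rightarrow> 'l"
    and sm :: "'k \<Rightarrow> 'm::ab_group_add \<Rightarrow> 'm"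
    and act :: "'l \<Rightarrow> 'm \<Rightarrow> 'm"
  assumes vl: "vector_space sl" and vm: "vector_space sm"
    and actadd: "\<And>x m n. act x (m + n) = act x m + act x n"
    and actsc: "\<And>x c m. act x (sm c m) = sm c (act x m)"
  shows "quot_iso (cscale sm)
     (cocycles sl sm UNIV (dL mult act (ract_a act)) (Suc k)) (coboundaries sl sm UNIV (dL mult act (ract_a act)) (Suc k))
     (cscale (hom_scale sm))
     (cocycles sl (hom_scale sm) (hom_space sl sm) (dLt mult (hom_act mult act)) k)
     (coboundaries sl (hom_scale sm) (hom_space sl sm) (dLt mult (hom_act mult act)) k)"
proof -
  have mm: "module sm" using vm by (simp add: module_iff_vector_space)
  interpret m: module sm by (fact mm)
  define D where "D = dL mult act (ract_a act)"
  define Dt where "Dt = dLt mult (hom_act mult act)"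
  define CM where "CM n = cochains sl sm UNIV n" for n
  define CH where "CH n = cochains sl (hom_scale sm) (hom_space sl sm) n" for n
  define S where "S n = {f :: 'l list \<Rightarrow> 'm. \<forall>xs. length xs \<noteq> n \<longrightarrow> f xs = 0}" for n
  have ch: "phi (Suc n) (D (Suc n) h) = Dt n (phi n h)" for n h
    unfolding D_def Dt_def by (rule chain)
  have phiCM: "phi n ` CM (Suc n) = CH n" for n
  proof
    show "phi n ` CM (Suc n) \<subseteq> CH n"
      using phi_cochain[OF vl vm] by (auto simp: CM_def CH_def cochains_def)
    show "CH n \<subseteq> phi n ` CM (Suc n)"
    proof
      fix g assume "g \<in> CH n"
      then have g: "cochain sl (hom_scale sm) (hom_space sl sm) n g" by (simp add: CH_def cochains_def)
      have "psi n g \<in> CM (Suc n)" using psi_cochain[OF vl vm g] by (simp add: CM_def cochains_def)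
      then show "g \<in> phi n ` CM (Suc n)" using phi_psi[OF g] by (metis image_eqI)
    qed
  qed
  have DS: "D n h \<in> S (Suc n)" for n h by (simp add: D_def S_def dL_def)
  have CMS: "f \<in> CM n \<Longrightarrow> f \<in> S n" for f n by (simp add: CM_def S_def cochains_def cochain_def)
  have Ddiff: "D n a - D n b = D n (a - b)" for n a b
    unfolding D_def by (rule dL_diff[where act = act and mult = mult and n = n and f = a and g = b, OF actadd, symmetric])
  have D0: "D n 0 = 0" for n using Ddiff[of n 0 0] by simp
  have CM0: "0 \<in> CM n" for n using cochain_zero[OF mm] by (simp add: CM_def cochains_def)
  have CMdiff: "a \<in> CM n \<Longrightarrow> b \<in> CM n \<Longrightarrow> a - b \<in> CM n" for a b n
    using cochain_diff[OF mm] by (simp add: CM_def cochains_def)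
  have CMsc: "a \<in> CM n \<Longrightarrow> cscale sm c a \<in> CM n" for a c n
    using cochain_scale[OF mm] by (simp add: CM_def cochains_def)
  have Dsc: "cscale sm c (D n a) = D n (cscale sm c a)" for n c a
    unfolding D_def by (rule dL_scale[where act = act and sm = sm and mult = mult and n = n and c = c and f = a, OF mm actsc, symmetric])
  have Z1: "cocycles sl sm UNIV D (Suc k) = {f \<in> CM (Suc k). D (Suc k) f = 0}"
    by (simp add: cocycles_def CM_def)
  have B1: "coboundaries sl sm UNIV D (Suc k) = D k ` CM k"
    by (simp add: coboundaries_def CM_def)
  have Z2: "cocycles sl (hom_scale sm) (hom_space sl sm) Dt k = {g \<in> CH k. Dt k g = 0}"
    by (simp add: cocycles_def CH_def)
  have "quot_iso (cscale sm) (cocycles sl sm UNIV D (Suc k)) (coboundaries sl sm UNIV D (Suc k))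
     (cscale (hom_scale sm)) (cocycles sl (hom_scale sm) (hom_space sl sm) Dt k)
     (coboundaries sl (hom_scale sm) (hom_space sl sm) Dt k)"
    unfolding Z1 B1 Z2
  proof (rule quot_iso_transfer[where SS = "S (Suc k)" and \<phi> = "phi k" and scA = "cscale sm" and scB = "cscale (hom_scale sm)"
      and ZA = "{f \<in> CM (Suc k). D (Suc k) f = 0}" and BA = "D k ` CM k" and ZB = "{g \<in> CH k. Dt k g = 0}"
      and BB = "coboundaries sl (hom_scale sm) (hom_space sl sm) Dt k"])
    show "inj_on (phi k) (S (Suc k))" unfolding S_def by (rule phi_inj)
    show "z + b \<in> S (Suc k)" if "z \<in> {f \<in> CM (Suc k). D (Suc k) f = 0}" "b \<in> D k ` CM k" for z b
      using that CMS DS by (auto simp: S_def)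
    show "phi k ` {f \<in> CM (Suc k). D (Suc k) f = 0} = {g \<in> CH k. Dt k g = 0}"
    proof
      show "phi k ` {f \<in> CM (Suc k). D (Suc k) f = 0} \<subseteq> {g \<in> CH k. Dt k g = 0}"
        using phiCM ch phi_zero by (auto simp flip: ch)
      show "{g \<in> CH k. Dt k g = 0} \<subseteq> phi k ` {f \<in> CM (Suc k). D (Suc k) f = 0}"
      proof
        fix g assume "g \<in> {g \<in> CH k. Dt k g = 0}"
        then have g: "g \<in> CH k" "Dt k g = 0" by auto
        then obtain f where f: "f \<in> CM (Suc k)" "g = phi k f" using phiCM by blast
        have "phi (Suc k) (D (Suc k) f) = phi (Suc k) 0" using ch g f phi_zero by simp
        then have "D (Suc k) f = 0"
          using phi_inj[of "Suc k"] DS[of "Suc k" f] CMS[OF CM0[of "Suc (Suc k)"]]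
          unfolding S_def inj_on_def by blast
        then show "g \<in> phi k ` {f \<in> CM (Suc k). D (Suc k) f = 0}" using f by blast
      qed
    qed
    show "phi k ` D k ` CM k = coboundaries sl (hom_scale sm) (hom_space sl sm) Dt k"
    proof (cases k)
      case 0
      have "D 0 ` CM 0 = {0}" using CM0[of 0] by (auto simp: D_def dL0)
      then show ?thesis using 0 phi_zero by (simp add: coboundaries_def)
    next
      case (Suc k')
      have "phi k ` D k ` CM k = Dt k' ` phi k' ` CM (Suc k')"
        unfolding image_image Suc ch ..
      then show ?thesis using Suc phiCM by (simp add: coboundaries_def CH_def)
    qed
    show "phi k (a + b) = phi k a + phi k b" for a b by (rule phi_add)
    show "0 \<in> D k ` CM k" using D0 CM0 by (metis image_eqI)
    show "a - b \<in> D k ` CM k" if "a \<in> D k ` CM k" "b \<in> D k ` CM k" for a b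
      using that Ddiff CMdiff by auto
    show "cscale sm c a - cscale sm c b = cscale sm c (a - b)" for c a b
      by (auto simp: cscale_def m.scale_right_diff_distrib intro!: ext)
    show "cscale sm c a \<in> D k ` CM k" if "a \<in> D k ` CM k" for c a
      using that Dsc CMsc by auto
    show "phi k (cscale sm c a) = cscale (hom_scale sm) c (phi k a)" for c a
      by (rule phi_scale[OF mm])
  qed
  then show ?thesis by (simp only: D_def Dt_def)
qed


lemma iso_zero:
  fixes sl :: "'k::field \<Rightarrow> 'l::ab_group_add \<Rightarrow> 'l"
    and mult :: "'l \<Rightarrow> 'l \<Rightarrow> 'l"
    and sm :: "'k \<Rightarrow> 'm::ab_group_add \<Rightarrow> 'm"
    and act :: "'l \<Rightarrow> 'm \<Rightarrow> 'm"
  assumes vm: "vector_space sm"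
  shows "HL_iso_space sl mult sm UNIV act (ract_a act) 0 sm UNIV"
proof -
  have mm: "module sm" using vm by (simp add: module_iff_vector_space)
  interpret m: module sm by (fact mm)
  have Z1: "cocycles sl sm UNIV (dL mult act (ract_a act)) 0 = cochains sl sm UNIV 0"
    by (simp add: cocycles_def dL0)
  have B1: "coboundaries sl sm UNIV (dL mult act (ract_a act)) 0 = {0}"
    by (simp add: coboundaries_def)
  show ?thesis unfolding HL_iso_space_def Z1 B1
  proof (rule quot_iso_transfer[where SS = "{f. \<forall>xs. xs \<noteq> [] \<longrightarrow> f xs = 0}" and \<phi> = "\<lambda>f. f []"
      and ZA = "cochains sl sm UNIV 0" and BA = "{0}" and ZB = UNIV and BB = "{0}" and scA = "cscale sm" and scB = sm])
    show "inj_on (\<lambda>f. f []) {f :: 'l list \<Rightarrow> 'm. \<forall>xs. xs \<noteq> [] \<longrightarrow> f xs = 0}"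
    proof (rule inj_onI)
      fix f g :: "'l list \<Rightarrow> 'm"
      assume h: "f \<in> {f. \<forall>xs. xs \<noteq> [] \<longrightarrow> f xs = 0}" "g \<in> {f. \<forall>xs. xs \<noteq> [] \<longrightarrow> f xs = 0}" "f [] = g []"
      show "f = g"
      proof (rule ext)
        fix xs show "f xs = g xs" using h by (cases "xs = []") auto
      qed
    qed
    show "z + b \<in> {f. \<forall>xs. xs \<noteq> [] \<longrightarrow> f xs = 0}" if "z \<in> cochains sl sm UNIV 0" "b \<in> {0}" for z b
      using that by (simp add: cochains_def cochain_def)
    show "(\<lambda>f. f []) ` cochains sl sm UNIV 0 = UNIV"
    proof (intro equalityI subsetI)
      fix m :: 'm
      show "m \<in> (\<lambda>f. f []) ` cochains sl sm UNIV 0"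
        by (rule image_eqI[where x = "\<lambda>xs. if xs = [] then m else (0::'m)"])
          (simp_all add: cochains_def cochain_def)
    qed simp
    show "(\<lambda>f. f []) ` {0} = {0::'m}" by simp
    show "(a + b) [] = a [] + b []" for a b :: "'l list \<Rightarrow> 'm" by simp
    show "(0 :: 'l list \<Rightarrow> 'm) \<in> {0}" by simp
    show "a - b \<in> {0}" if "a \<in> {0}" "b \<in> {0}" for a b :: "'l list \<Rightarrow> 'm" using that by simp
    show "cscale sm c a - cscale sm c b = cscale sm c (a - b)" for c a b
      by (auto simp: cscale_def m.scale_right_diff_distrib intro!: ext)
    show "cscale sm c a \<in> {0}" if "a \<in> {0}" for c a
      using that by (auto simp: cscale_def intro!: ext)
    show "cscale sm c a [] = sm c (a [])" for c a by (simp add: cscale_def)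
  qed
qed


theorem lemma1p4:
  fixes sl :: "'k::field \<Rightarrow> 'l::ab_group_add \<Rightarrow> 'l"
    and mult :: "'l \<Rightarrow> 'l \<Rightarrow> 'l"
    and sm :: "'k \<Rightarrow> 'm::ab_group_add \<Rightarrow> 'm"
    and act :: "'l \<Rightarrow> 'm \<Rightarrow> 'm"
  assumes "left_leibniz_algebra sl mult"
    and "left_module sl mult sm UNIV act"
  shows "(\<forall>n. HL sl mult sm UNIV act (ract_s act) n = HLt sl mult sm UNIV act n)
    \<and> HL_iso_space sl mult sm UNIV act (ract_a act) 0 sm UNIV
    \<and> (\<forall>n\<ge>1.
         HL_iso_HLt sl mult sm UNIV act (ract_a act) n
           (hom_scale sm) (hom_space sl sm) (hom_act mult act) (n - 1)
       \<and> HLt sl mult (hom_scale sm) (hom_space sl sm) (hom_act mult act) (n - 1)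
         = HL sl mult (hom_scale sm) (hom_space sl sm) (hom_act mult act)
             (ract_s (hom_act mult act)) (n - 1))"
proof -
  note lm = assms(2)[unfolded left_module_def]
  have vl: "vector_space sl" using assms(1)[unfolded left_leibniz_algebra_def] by (rule conjunct1)
  have vm: "vector_space sm" using lm by (rule conjunct1)
  have aa: "\<forall>x. \<forall>m\<in>UNIV. \<forall>n\<in>UNIV. act x (m + n) = act x m + act x n"
    using lm[THEN conjunct2, THEN conjunct2, THEN conjunct2, THEN conjunct2, THEN conjunct2,
      THEN conjunct2, THEN conjunct2, THEN conjunct1] .
  have as: "\<forall>c x. \<forall>m\<in>UNIV. act x (sm c m) = sm c (act x m)"
    using lm[THEN conjunct2, THEN conjunct2, THEN conjunct2, THEN conjunct2, THEN conjunct2,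
      THEN conjunct2, THEN conjunct2, THEN conjunct2, THEN conjunct1] .
  have actadd: "\<And>x m n. act x (m + n) = act x m + act x n" using aa by blast
  have actsc: "\<And>x c m. act x (sm c m) = sm c (act x m)" using as by blast
  have A: "\<forall>n. HL sl mult sm UNIV act (ract_s act) n = HLt sl mult sm UNIV act n"
    by (simp only: HL_def HLt_def dL_s simp_thms)
  have B: "HL_iso_space sl mult sm UNIV act (ract_a act) 0 sm UNIV"
    by (rule iso_zero[OF vm])
  have C: "HL_iso_HLt sl mult sm UNIV act (ract_a act) n
           (hom_scale sm) (hom_space sl sm) (hom_act mult act) (n - 1)
       \<and> HLt sl mult (hom_scale sm) (hom_space sl sm) (hom_act mult act) (n - 1)
         = HL sl mult (hom_scale sm) (hom_space sl sm) (hom_act mult act)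
             (ract_s (hom_act mult act)) (n - 1)" if n1: "n \<ge> 1" for n
  proof (rule conjI)
    obtain k where k: "n = Suc k" using n1 by (cases n) auto
    show "HL_iso_HLt sl mult sm UNIV act (ract_a act) n
           (hom_scale sm) (hom_space sl sm) (hom_act mult act) (n - 1)"
      unfolding k HL_iso_HLt_def diff_Suc_1 by (rule iso_main[where sl = sl and sm = sm and act = act and mult = mult and k = k, OF vl vm actadd actsc])
    show "HLt sl mult (hom_scale sm) (hom_space sl sm) (hom_act mult act) (n - 1)
         = HL sl mult (hom_scale sm) (hom_space sl sm) (hom_act mult act)
             (ract_s (hom_act mult act)) (n - 1)"
      by (simp only: HL_def HLt_def dL_s)
  qed
  show ?thesis using A B C by blast
qed

end
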